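(* Let $f\in\mathbb C\{\{x\}\}_{\mathbb P}$ with $R=\operatorname{rad}(f)>0$, let $G=\{a\in\mathbb C:|a|<R\}$, and for $a\in G$ let $f_a\in\mathbb C\{\{x-a\}\}_{\mathbb P}$ be the expansion of $f$ around $a$. Then $F=(f_a)_{a\in G}$ is a planar analytic function on $G$. Equivalently: for all $a,b\in G$ with $|b-a|<\operatorname{rad}(f_a)$, the expansion of $f_a$ around $b$ equals $f_b$.
   Context: Let $\mathbb P$ denote the set of finite planar reduced rooted trees (children of each vertex linearly ordered, no vertex with exactly one child), including the empty tree $\mathbf 1$ and the one-vertex tree $|$; $\deg(T)$ is the number of leaves, $L(T)$ the set of leaves. The algebra $\mathbb C\{x\}_{\mathbb P}$ has basis $\{x^T\}$, $x^{\mathbf 1}=1$, $x^|=x$, with $k$-linear operations $\omega_k$ ($k\ge2$), $\omega_k(x^{T_1},\dots,x^{T_k})=x^T$ where $T$ is obtained by attaching the nonempty $T_i$ in order as subtrees of the children of a new root (if exactly one is nonempty, $T$ is that one; if none, $T=\mathbf 1$); $y^T$ denotes the iteration of these operations along $T$ starting from $y$, e.g. $(x-a)^T$. $\mathbb C\{\{x-a\}\}_{\mathbb P}$ is the space of formal series $\sum_T\gamma_T(x-a)^T$, with coefficients $\langle f,(x-a)^T\rangle$. Radius of convergence: $\operatorname{rad}(\sum_T\gamma_T(x-a)^T)=\sup\{\rho\ge0:\sum_T|\gamma_T|\rho^{\deg T}<\infty\}$. Contraction $S|I$ for $I\subseteq L(S)$: the tree obtained from the subtree of $S$ spanned by the root-to-leaf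 paths to leaves in $I$ by suppressing all vertices with exactly one child; planar binomial coefficient $(S/T)=\#\{I\subseteq L(S):S|I=T\}$. If $f\in\mathbb C\{\{x-a\}\}_{\mathbb P}$ and $|b-a|<\operatorname{rad}(f)$, the expansion of $f$ around $b$ is $\sum_T\gamma_T(b)(x-b)^T\in\mathbb C\{\{x-b\}\}_{\mathbb P}$ with $\gamma_T(b)=\sum_{U\in\mathbb P}\langle f,(x-a)^U\rangle(U/T)(b-a)^{\deg U-\deg T}$. A planar analytic function on a region $D\subseteq\mathbb C$ is a family $F=(f_a)_{a\in D}$ with $f_a\in\mathbb C\{\{x-a\}\}_{\mathbb P}$, $\operatorname{rad}(f_a)>0$ for all $a$, such that whenever $a,b\in D$ and $\operatorname{rad}(f_a)>|b-a|$, the expansion of $f_a$ around $b$ equals $f_b$. *)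

theory Defs
  imports "HOL-Analysis.Analysis"
begin

text \<open>Planar rooted trees. Emp is the empty tree; Nd [] is the one-vertex tree;
  Nd ts is a root whose children are the roots of the subtrees ts, in order.\<close>
datatype ptree = Emp | Nd "ptree list"

fun reduced :: "ptree \<Rightarrow> bool" where
  "reduced Emp = True"
| "reduced (Nd ts) = (length ts \<noteq> 1 \<and> (\<forall>t\<in>set ts. t \<noteq> Emp \<and> reduced t))"

definition PT :: "ptree set" where
  "PT = {T. reduced T}"

lemma zip_upt_size: "(i, t) \<in> set (zip [0..<length ts] ts) \<Longrightarrow> size t < Suc (size_list size ts)"
proof -
  assume "(i, t) \<in> set (zip [0..<length ts] ts)"
  then have "t \<in> set ts" by (rule set_zip_rightD)
  then have "size t \<le> size_list size ts" by (rule size_list_estimation') simp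
  then show ?thesis by simp
qed

text \<open>Leaves as root-to-leaf paths of child indices.\<close>
function leaves :: "ptree \<Rightarrow> nat list set" where
  "leaves Emp = {}"
| "leaves (Nd ts) = (if ts = [] then {[]}
     else (\<Union>(i, t)\<in>set (zip [0..<length ts] ts). (Cons i) ` leaves t))"
  by pat_completeness auto
termination
  by (relation "Wellfounded.measure size") (auto dest: zip_upt_size)

definition deg :: "ptree \<Rightarrow> nat" where
  "deg T = card (leaves T)"

text \<open>Contraction S|I: spanned subtree, suppressing vertices with exactly one child
  (empty contraction is the empty tree).\<close>
function contr :: "ptree \<Rightarrow> nat list set \<Rightarrow> ptree" where
  "contr Emp I = Emp"
| "contr (Nd ts) I = (if ts = [] then (if [] \<in> I then Nd [] else Emp)
     else (let cs = filter (\<lambda>c. c \<noteq> Emp)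
                 (map (\<lambda>(i, t). contr t {p. i # p \<in> I}) (zip [0..<length ts] ts))
           in if cs = [] then Emp else if length cs = 1 then hd cs else Nd cs))"
  by pat_completeness auto
termination
  by (relation "Wellfounded.measure (\<lambda>(t, I). size t)") (auto dest: zip_upt_size)

definition pbinom :: "ptree \<Rightarrow> ptree \<Rightarrow> nat" where
  "pbinom S T = card {I. I \<subseteq> leaves S \<and> contr S I = T}"

text \<open>A formal planar series sum_T gamma_T (x-a)^T is represented by its coefficient
  function gamma (only values on PT matter); the centre a is kept externally.\<close>
type_synonym pseries = "ptree \<Rightarrow> complex"

definition prad :: "pseries \<Rightarrow> ereal" where
  "prad g = Sup {ereal \<rho> | \<rho>. \<rho> \<ge> 0 \<and>
      (\<lambda>T. norm (g T) * \<rho> ^ deg T) summable_on PT}"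

text \<open>Expansion of a series centred at a around b, where h = b - a.\<close>
definition pexpand :: "pseries \<Rightarrow> complex \<Rightarrow> pseries" where
  "pexpand g h T = (\<Sum>\<^sub>\<infinity>U\<in>PT. g U * of_nat (pbinom U T) * h ^ (deg U - deg T))"

definition series_eq :: "pseries \<Rightarrow> pseries \<Rightarrow> bool" where
  "series_eq g g' \<longleftrightarrow> (\<forall>T\<in>PT. g T = g' T)"

definition planar_analytic :: "complex set \<Rightarrow> (complex \<Rightarrow> pseries) \<Rightarrow> bool" where
  "planar_analytic D F \<longleftrightarrow> open D \<and> connected D \<and> D \<noteq> {} \<and>
     (\<forall>a\<in>D. prad (F a) > 0) \<and>
     (\<forall>a\<in>D. \<forall>b\<in>D. ereal (cmod (b - a)) < prad (F a) \<longrightarrow>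
        series_eq (pexpand (F a) (b - a)) (F b))"

end

theory Submission
  imports Defs "HOL-Analysis.FPS_Convergence" "HOL-Complex_Analysis.Conformal_Mappings"
begin


lemma zip_upt_eq: "zip [0..<length ts] ts = map (\<lambda>i. (i, ts!i)) [0..<length ts]"
  by (rule nth_equalityI) auto

lemma leaves_Nd: "ts \<noteq> [] \<Longrightarrow> leaves (Nd ts) = {i # p | i p. i < length ts \<and> p \<in> leaves (ts!i)}"
  by (auto simp: leaves.simps zip_upt_eq)

lemma leaves_Nil[simp]: "leaves (Nd []) = {[]}" by (simp add: leaves.simps)
lemma contr_Nil[simp]: "contr (Nd []) I = (if [] \<in> I then Nd [] else Emp)" by (simp add: contr.simps)

declare leaves.simps(2)[simp del] contr.simps(2)[simp del]

definition nrm :: "ptree list \<Rightarrow> ptree" where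
  "nrm cs = (let cs' = filter (\<lambda>c. c \<noteq> Emp) cs in
     if cs' = [] then Emp else if length cs' = 1 then hd cs' else Nd cs')"

lemma contr_Nd: "ts \<noteq> [] \<Longrightarrow> contr (Nd ts) I = nrm (map (\<lambda>i. contr (ts!i) {p. i#p \<in> I}) [0..<length ts])"
  by (simp add: contr.simps zip_upt_eq nrm_def Let_def o_def)

lemma finite_leaves: "finite (leaves t)"
proof (induction t)
  case Emp then show ?case by simp
next
  case (Nd ts)
  show ?case
  proof (cases "ts = []")
    case False
    have "leaves (Nd ts) = (\<Union>i<length ts. Cons i ` leaves (ts!i))"
      using False by (auto simp: leaves_Nd)
    then show ?thesis using Nd by simp
  qed simp
qed

lemma contr_empty: "contr t {} = Emp"
proof (induction t)
  case (Nd ts)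
  then show ?case by (cases "ts = []") (auto simp: contr_Nd nrm_def filter_empty_conv)
qed simp

lemma leaves_ne: "reduced t \<Longrightarrow> t \<noteq> Emp \<Longrightarrow> leaves t \<noteq> {}"
proof (induction t)
  case (Nd ts)
  show ?case
  proof (cases "ts = []")
    case False
    then have "ts!0 \<in> set ts" by simp
    with Nd have "leaves (ts!0) \<noteq> {}" by auto
    then show ?thesis using False by (auto simp: leaves_Nd)
  qed simp
qed simp

lemma reduced_nrm: "(\<And>c. c \<in> set cs \<Longrightarrow> reduced c) \<Longrightarrow> reduced (nrm cs)"
proof -
  assume h: "\<And>c. c \<in> set cs \<Longrightarrow> reduced c"
  define cs' where "cs' = filter (\<lambda>c. c \<noteq> Emp) cs"
  have a: "\<forall>c\<in>set cs'. c \<noteq> Emp \<and> reduced c" using h by (auto simp: cs'_def)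
  show ?thesis
  proof (cases "cs' = []")
    case False
    then have "hd cs' \<in> set cs'" by simp
    with a False show ?thesis by (auto simp: nrm_def cs'_def[symmetric] Let_def)
  qed (simp add: nrm_def cs'_def[symmetric])
qed

lemma filter_map_emp:
  "(\<And>i. i \<in> set xs \<Longrightarrow> \<not> P i \<Longrightarrow> g i = Emp) \<Longrightarrow>
   filter (\<lambda>c. c \<noteq> Emp) (map g xs) = filter (\<lambda>c. c \<noteq> Emp) (map g (filter P xs))"
  by (induction xs) auto

lemma nrm_filter:
  "(\<And>i. i \<in> set xs \<Longrightarrow> \<not> P i \<Longrightarrow> g i = Emp) \<Longrightarrow> nrm (map g xs) = nrm (map g (filter P xs))"
  unfolding nrm_def using filter_map_emp[of xs P g] by simp

lemma nrm_single[simp]: "nrm [c] = c"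
  by (simp add: nrm_def)

lemma nrm_Nil[simp]: "nrm [] = Emp"
  by (simp add: nrm_def)

lemma nrm_many: "length cs \<noteq> 1 \<Longrightarrow> cs \<noteq> [] \<Longrightarrow> (\<And>c. c \<in> set cs \<Longrightarrow> c \<noteq> Emp) \<Longrightarrow> nrm cs = Nd cs"
proof -
  assume "length cs \<noteq> 1" "cs \<noteq> []" "\<And>c. c \<in> set cs \<Longrightarrow> c \<noteq> Emp"
  moreover have "filter (\<lambda>c. c \<noteq> Emp) cs = cs" using calculation(3) by (simp add: filter_id_conv)
  ultimately show ?thesis by (simp add: nrm_def)
qed

lemma map_idx: "map g xs = map (\<lambda>j. g (xs!j)) [0..<length xs]"
  by (rule nth_equalityI) auto



lemma contr_main:
  "reduced U \<Longrightarrow> I \<subseteq> leaves U \<Longrightarrow> reduced (contr U I) \<and>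
    (\<exists>\<psi>. bij_betw \<psi> (leaves (contr U I)) I \<and>
       (\<forall>J \<subseteq> leaves (contr U I). contr U (\<psi> ` J) = contr (contr U I) J))"
proof (induction U arbitrary: I)
  case Emp
  then show ?case by (auto intro!: exI[of _ id] simp: bij_betw_def)
next
  case (Nd ts)
  show ?case
  proof (cases "ts = []")
    case True
    with Nd.prems show ?thesis
      by (cases "[] \<in> I") (auto intro!: exI[of _ id] simp: bij_betw_def subset_singleton_iff)
  next
    case False
    define n where "n = length ts"
    define Ii where "Ii i = {p. i # p \<in> I}" for i
    define c where "c i = contr (ts!i) (Ii i)" for i
    have sub: "Ii i \<subseteq> leaves (ts!i)" if "i < n" for i
      using Nd.prems(2) False that by (auto simp: Ii_def leaves_Nd n_def)
    have Isub: "i < n \<and> p \<in> Ii i" if "i # p \<in> I" for i p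
      using Nd.prems(2) False that by (auto simp: Ii_def leaves_Nd n_def)
    have red: "reduced (ts!i)" if "i < n" for i
      using Nd.prems(1) that by (auto simp: n_def)
    have "\<forall>i<n. reduced (c i) \<and> (\<exists>\<psi>. bij_betw \<psi> (leaves (c i)) (Ii i) \<and>
       (\<forall>J \<subseteq> leaves (c i). contr (ts!i) (\<psi> ` J) = contr (c i) J))"
      using Nd.IH red sub unfolding c_def n_def by auto
    then obtain \<Psi> where redc: "\<And>i. i < n \<Longrightarrow> reduced (c i)"
      and bijP: "\<And>i. i < n \<Longrightarrow> bij_betw (\<Psi> i) (leaves (c i)) (Ii i)"
      and trP: "\<And>i J. i < n \<Longrightarrow> J \<subseteq> leaves (c i) \<Longrightarrow> contr (ts!i) (\<Psi> i ` J) = contr (c i) J"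
      by metis
    have cE: "c i = Emp \<longleftrightarrow> Ii i = {}" if "i < n" for i
    proof
      assume "c i = Emp"
      then show "Ii i = {}" using bijP[OF that] by (simp add: bij_betw_def)
    next
      assume "Ii i = {}"
      then show "c i = Emp" by (simp add: c_def contr_empty)
    qed
    define idx where "idx = filter (\<lambda>i. c i \<noteq> Emp) [0..<n]"
    have idx_set: "set idx = {i. i < n \<and> Ii i \<noteq> {}}" using cE by (auto simp: idx_def)
    have idx_dist: "distinct idx" by (simp add: idx_def)
    have inI: "i \<in> set idx" if "i # p \<in> I" for i p
      using Isub[OF that] idx_set by auto
    have cU: "contr (Nd ts) K = nrm (map (\<lambda>i. contr (ts!i) {p. i # p \<in> K}) idx)" if "K \<subseteq> I" for K
    proof -
      have "contr (Nd ts) K = nrm (map (\<lambda>i. contr (ts!i) {p. i # p \<in> K}) [0..<n])"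
        using False by (simp add: contr_Nd n_def)
      also have "\<dots> = nrm (map (\<lambda>i. contr (ts!i) {p. i # p \<in> K}) idx)"
        unfolding idx_def
      proof (rule nrm_filter)
        fix i assume "i \<in> set [0..<n]" "\<not> c i \<noteq> Emp"
        then have "Ii i = {}" using cE by auto
        then have "{p. i # p \<in> K} = {}" using that by (auto simp: Ii_def)
        then show "contr (ts ! i) {p. i # p \<in> K} = Emp" by (simp add: contr_empty)
      qed
      finally show ?thesis .
    qed
    have cUI: "contr (Nd ts) I = nrm (map c idx)"
    proof -
      have "(\<lambda>i. contr (ts!i) {p. i # p \<in> I}) = c" by (rule ext) (simp add: c_def Ii_def)
      then show ?thesis using cU[of I] by simp
    qed
    consider "idx = []" | i0 where "idx = [i0]" | "length idx \<ge> 2"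
      by (cases idx; cases "tl idx"; auto)
    then show ?thesis
    proof cases
      case 1
      have "I = {}"
      proof (rule ccontr)
        assume "I \<noteq> {}"
        then obtain p where "p \<in> I" by auto
        with Nd.prems(2) False obtain i q where "p = i # q" by (auto simp: leaves_Nd)
        with inI \<open>p \<in> I\<close> 1 show False by auto
      qed
      then show ?thesis using cUI 1 by (auto intro!: exI[of _ id] simp: bij_betw_def contr_empty)
    next
      case 2
      then have "i0 \<in> set idx" by simp
      then have i0: "i0 < n" "c i0 \<noteq> Emp" unfolding idx_def by auto
      have Ieq: "I = Cons i0 ` Ii i0"
      proof
        show "I \<subseteq> Cons i0 ` Ii i0"
        proof
          fix p assume "p \<in> I"
          with Nd.prems(2) False obtain i q where pq: "p = i # q" by (auto simp: leaves_Nd)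
          with inI \<open>p \<in> I\<close> 2 have "i = i0" by auto
          with pq \<open>p \<in> I\<close> show "p \<in> Cons i0 ` Ii i0" by (auto simp: Ii_def)
        qed
      qed (auto simp: Ii_def)
      have res: "contr (Nd ts) I = c i0" using cUI 2 by simp
      show ?thesis
      proof (intro conjI exI)
        show "reduced (contr (Nd ts) I)" using res redc i0 by simp
        show "bij_betw (\<lambda>q. i0 # \<Psi> i0 q) (leaves (contr (Nd ts) I)) I"
        proof -
          have "bij_betw (\<lambda>q. i0 # \<Psi> i0 q) (leaves (c i0)) (Cons i0 ` Ii i0)"
            using bijP[OF i0(1)] by (auto simp: bij_betw_def inj_on_def image_image)
          then show ?thesis using res Ieq by simp
        qed
        show "\<forall>J\<subseteq>leaves (contr (Nd ts) I). contr (Nd ts) ((\<lambda>q. i0 # \<Psi> i0 q) ` J) = contr (contr (Nd ts) I) J"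
        proof (intro allI impI)
          fix J assume J: "J \<subseteq> leaves (contr (Nd ts) I)"
          have JI: "(\<lambda>q. i0 # \<Psi> i0 q) ` J \<subseteq> I"
          proof -
            have "(\<lambda>q. i0 # \<Psi> i0 q) ` J \<subseteq> Cons i0 ` Ii i0"
              using J bijP[OF i0(1)] res by (auto simp: bij_betw_def)
            then show ?thesis using Ieq by simp
          qed
          have "{p. i0 # p \<in> (\<lambda>q. i0 # \<Psi> i0 q) ` J} = \<Psi> i0 ` J" by auto
          then show "contr (Nd ts) ((\<lambda>q. i0 # \<Psi> i0 q) ` J) = contr (contr (Nd ts) I) J"
            using cU[OF JI] 2 trP[OF i0(1)] J res by simp
        qed
      qed
    next
      case 3
      define cs where "cs = map c idx"
      have idx_lt: "idx!j < n" "c (idx!j) \<noteq> Emp" if "j < length idx" for j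
        using that nth_mem[OF that] by (auto simp: idx_def)
      have cs_ne: "\<And>x. x \<in> set cs \<Longrightarrow> x \<noteq> Emp" by (auto simp: cs_def idx_def)
      have res: "contr (Nd ts) I = Nd cs"
      proof -
        have "nrm cs = Nd cs" using 3 cs_ne by (intro nrm_many) (auto simp: cs_def)
        then show ?thesis using cUI by (simp add: cs_def)
      qed
      have csne: "cs \<noteq> []" using 3 by (auto simp: cs_def)
      have lvs: "leaves (Nd cs) = {j # q |j q. j < length idx \<and> q \<in> leaves (c (idx!j))}"
      proof -
        have "leaves (Nd cs) = {i # p |i p. i < length cs \<and> p \<in> leaves (cs ! i)}"
          by (rule leaves_Nd[OF csne])
        also have "\<dots> = {i # p |i p. i < length idx \<and> p \<in> leaves (map c idx ! i)}"
          unfolding cs_def by (simp only: length_map)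
        also have "\<dots> = {j # q |j q. j < length idx \<and> q \<in> leaves (c (idx ! j))}"
          by (metis (lifting) nth_map)
        finally show ?thesis .
      qed
      define \<psi> where "\<psi> p = idx!(hd p) # \<Psi> (idx!(hd p)) (tl p)" for p
      have \<psi>_simp: "\<psi> (j # q) = idx!j # \<Psi> (idx!j) q" for j q by (simp add: \<psi>_def)
      have bij: "bij_betw \<psi> (leaves (Nd cs)) I"
      proof (rule bij_betw_imageI)
        show "inj_on \<psi> (leaves (Nd cs))"
        proof (rule inj_onI)
          fix x y assume x: "x \<in> leaves (Nd cs)" and y: "y \<in> leaves (Nd cs)" and e: "\<psi> x = \<psi> y"
          from x obtain j q where xq: "x = j # q" "j < length idx" "q \<in> leaves (c (idx!j))" by (auto simp: lvs)
          from y obtain j' q' where yq: "y = j' # q'" "j' < length idx" "q' \<in> leaves (c (idx!j'))" by (auto simp: lvs)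
          from e have "idx!j = idx!j'" by (simp add: xq yq \<psi>_simp)
          then have jj: "j = j'" using idx_dist xq yq nth_eq_iff_index_eq by blast
          from e have "\<Psi> (idx!j) q = \<Psi> (idx!j) q'" by (simp add: xq yq \<psi>_simp jj)
          then have "q = q'" using bijP[OF idx_lt(1)[OF xq(2)]] xq yq jj by (auto simp: bij_betw_def inj_on_def)
          then show "x = y" using xq yq jj by simp
        qed
        show "\<psi> ` leaves (Nd cs) = I"
        proof
          show "\<psi> ` leaves (Nd cs) \<subseteq> I"
          proof
            fix x assume "x \<in> \<psi> ` leaves (Nd cs)"
            then obtain j q where "x = \<psi> (j # q)" "j < length idx" "q \<in> leaves (c (idx!j))" by (auto simp: lvs)
            moreover then have "\<Psi> (idx!j) q \<in> Ii (idx!j)" using bijP[OF idx_lt(1)] by (auto simp: bij_betw_def)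
            ultimately show "x \<in> I" by (simp add: \<psi>_simp Ii_def)
          qed
          show "I \<subseteq> \<psi> ` leaves (Nd cs)"
          proof
            fix x assume xI: "x \<in> I"
            with Nd.prems(2) False obtain i p where xp: "x = i # p" by (auto simp: leaves_Nd)
            with xI inI have "i \<in> set idx" by auto
            then obtain j where j: "j < length idx" "idx!j = i" by (auto simp: in_set_conv_nth)
            have "p \<in> Ii i" using xI xp by (simp add: Ii_def)
            then obtain q where "q \<in> leaves (c i)" "p = \<Psi> i q"
              using bijP[OF idx_lt(1)[OF j(1)]] j by (auto simp: bij_betw_def)
            then show "x \<in> \<psi> ` leaves (Nd cs)"
              using j xp by (auto simp: lvs \<psi>_simp intro!: image_eqI[of _ _ "j # q"])
          qed
        qed
      qed
      show ?thesis
      proof (intro conjI exI)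
        show "reduced (contr (Nd ts) I)"
        proof -
          have "\<forall>t\<in>set cs. t \<noteq> Emp \<and> reduced t"
          proof
            fix t assume t: "t \<in> set cs"
            then obtain i where "i \<in> set idx" "t = c i" by (auto simp: cs_def)
            then show "t \<noteq> Emp \<and> reduced t" using redc cs_ne t unfolding idx_def by auto
          qed
          moreover have "length cs \<noteq> 1" using 3 by (simp add: cs_def)
          ultimately show ?thesis using res by simp
        qed
        show "bij_betw \<psi> (leaves (contr (Nd ts) I)) I" using res bij by simp
        show "\<forall>J\<subseteq>leaves (contr (Nd ts) I). contr (Nd ts) (\<psi> ` J) = contr (contr (Nd ts) I) J"
        proof (intro allI impI)
          fix J assume J: "J \<subseteq> leaves (contr (Nd ts) I)"
          define Jj where "Jj j = {q. j # q \<in> J}" for j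
          have JI: "\<psi> ` J \<subseteq> I" using J bij res by (auto simp: bij_betw_def)
          have Jjsub: "Jj j \<subseteq> leaves (c (idx!j))" if "j < length idx" for j
            using J res that by (auto simp: Jj_def lvs)
          have Kj: "{p. idx!j # p \<in> \<psi> ` J} = \<Psi> (idx!j) ` Jj j" if j: "j < length idx" for j
          proof
            show "{p. idx!j # p \<in> \<psi> ` J} \<subseteq> \<Psi> (idx!j) ` Jj j"
            proof
              fix p assume "p \<in> {p. idx!j # p \<in> \<psi> ` J}"
              then obtain y where y: "y \<in> J" "idx!j # p = \<psi> y" by auto
              then obtain j' q where yq: "y = j' # q" "j' < length idx" using J res by (auto simp: lvs)
              with y have "idx!j = idx!j'" "p = \<Psi> (idx!j') q" by (auto simp: \<psi>_simp)
              then have "j = j'" "p = \<Psi> (idx!j) q" using idx_dist j yq nth_eq_iff_index_eq by auto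
              then show "p \<in> \<Psi> (idx!j) ` Jj j" using y yq by (auto simp: Jj_def)
            qed
          qed (auto simp: Jj_def \<psi>_simp intro!: image_eqI[where x="j # q" for q])
          have "contr (Nd ts) (\<psi> ` J) = nrm (map (\<lambda>i. contr (ts!i) {p. i # p \<in> \<psi> ` J}) idx)"
            using cU[OF JI] .
          also have "\<dots> = nrm (map (\<lambda>j. contr (ts!(idx!j)) {p. idx!j # p \<in> \<psi> ` J}) [0..<length idx])"
            by (subst map_idx) simp
          also have "\<dots> = nrm (map (\<lambda>j. contr (c (idx!j)) (Jj j)) [0..<length idx])"
            by (rule arg_cong[where f=nrm], rule map_cong[OF refl])
               (simp add: Kj trP[OF idx_lt(1)] Jjsub)
          also have "\<dots> = contr (Nd cs) J"
            using csne unfolding contr_Nd[OF csne] Jj_def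
            by (intro arg_cong[where f=nrm] map_cong) (auto simp: cs_def)
          finally show "contr (Nd ts) (\<psi> ` J) = contr (contr (Nd ts) I) J" using res by simp
        qed
      qed
    qed
  qed
qed


lemma contr_PT: "U \<in> PT \<Longrightarrow> I \<subseteq> leaves U \<Longrightarrow> contr U I \<in> PT"
  using contr_main by (auto simp: PT_def)

lemma deg_contr: "U \<in> PT \<Longrightarrow> I \<subseteq> leaves U \<Longrightarrow> deg (contr U I) = card I"
  using contr_main[of U I] by (auto simp: PT_def deg_def dest: bij_betw_same_card)

lemma card_leaves_contr: "U \<in> PT \<Longrightarrow> I \<subseteq> leaves U \<Longrightarrow> card (leaves (contr U I)) = card I"
  using deg_contr by (simp add: deg_def)

definition CT :: "ptree \<Rightarrow> ptree set" where
  "CT U = contr U ` Pow (leaves U)"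

lemma finite_CT: "finite (CT U)"
  by (simp add: CT_def finite_leaves)

lemma CT_PT: "U \<in> PT \<Longrightarrow> CT U \<subseteq> PT"
  using contr_PT by (auto simp: CT_def)

lemma pbinom_alt: "pbinom U T = card {I \<in> Pow (leaves U). contr U I = T}"
  unfolding pbinom_def by (rule arg_cong[where f=card]) auto

lemma pbinom_zero: "T \<notin> CT U \<Longrightarrow> pbinom U T = 0"
  unfolding pbinom_alt CT_def by (auto simp: card_eq_0_iff)

lemma deg_le: "U \<in> PT \<Longrightarrow> T \<in> CT U \<Longrightarrow> deg T \<le> deg U"
  by (auto simp: CT_def card_leaves_contr deg_def finite_leaves card_mono)

lemma fiber_sum:
  fixes w :: "ptree \<Rightarrow> 'a::comm_semiring_1"
  shows "(\<Sum>T\<in>CT U. of_nat (pbinom U T) * w T) = (\<Sum>I\<in>Pow (leaves U). w (contr U I))"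
proof -
  have "(\<Sum>I\<in>Pow (leaves U). w (contr U I)) =
        (\<Sum>T\<in>CT U. \<Sum>I\<in>{I. I \<in> Pow (leaves U) \<and> contr U I = T}. w (contr U I))"
    unfolding CT_def by (rule sum.image_gen) (simp add: finite_leaves)
  also have "\<dots> = (\<Sum>T\<in>CT U. of_nat (pbinom U T) * w T)"
    by (rule sum.cong[OF refl]) (simp add: pbinom_alt)
  finally show ?thesis by simp
qed

lemma binom_Pow:
  fixes x y :: "'a::comm_semiring_1"
  assumes "finite A"
  shows "(\<Sum>I\<in>Pow A. x ^ (card A - card I) * y ^ card I) = (x + y) ^ card A"
  using assms
proof (induction A rule: finite_induct)
  case empty then show ?case by simp
next
  case (insert a A)
  have disj: "Pow A \<inter> insert a ` Pow A = {}" using insert by auto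
  have inj: "inj_on (insert a) (Pow A)" using insert by (auto simp: inj_on_def)
  have le: "card I \<le> card A" if "I \<in> Pow A" for I using that insert card_mono by auto
  have "(\<Sum>I\<in>Pow (insert a A). x ^ (card (insert a A) - card I) * y ^ card I) =
        (\<Sum>I\<in>Pow A. x ^ (card (insert a A) - card I) * y ^ card I) +
        (\<Sum>I\<in>insert a ` Pow A. x ^ (card (insert a A) - card I) * y ^ card I)"
    unfolding Pow_insert using insert disj by (intro sum.union_disjoint) auto
  also have "(\<Sum>I\<in>Pow A. x ^ (card (insert a A) - card I) * y ^ card I) =
     x * (\<Sum>I\<in>Pow A. x ^ (card A - card I) * y ^ card I)"
    unfolding sum_distrib_left
  proof (rule sum.cong[OF refl])
    fix I assume "I \<in> Pow A"
    then have "card (insert a A) - card I = Suc (card A - card I)" using insert le[of I] by simp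
    then show "x ^ (card (insert a A) - card I) * y ^ card I = x * (x ^ (card A - card I) * y ^ card I)"
      by (simp add: mult.assoc)
  qed
  also have "(\<Sum>I\<in>insert a ` Pow A. x ^ (card (insert a A) - card I) * y ^ card I) =
     y * (\<Sum>I\<in>Pow A. x ^ (card A - card I) * y ^ card I)"
    unfolding sum.reindex[OF inj] sum_distrib_left o_def
  proof (rule sum.cong[OF refl])
    fix I assume I: "I \<in> Pow A"
    then have "a \<notin> I" "finite I" using insert finite_subset by auto
    then show "x ^ (card (insert a A) - card (insert a I)) * y ^ card (insert a I) = y * (x ^ (card A - card I) * y ^ card I)"
      using insert by (simp add: mult_ac)
  qed
  finally show ?case using insert by (simp add: distrib_right)
qed

lemma binom_Pow_rel:
  fixes x y :: "'a::comm_semiring_1"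
  assumes "finite A" "K \<subseteq> A"
  shows "(\<Sum>I\<in>{I. K \<subseteq> I \<and> I \<subseteq> A}. x ^ (card A - card I) * y ^ (card I - card K)) = (x + y) ^ (card A - card K)"
proof -
  have fin: "finite K" using assms finite_subset by auto
  have inj: "inj_on (\<lambda>I'. K \<union> I') (Pow (A - K))" by (auto simp: inj_on_def)
  have img: "(\<lambda>I'. K \<union> I') ` Pow (A - K) = {I. K \<subseteq> I \<and> I \<subseteq> A}"
  proof
    show "{I. K \<subseteq> I \<and> I \<subseteq> A} \<subseteq> (\<lambda>I'. K \<union> I') ` Pow (A - K)"
    proof
      fix I assume "I \<in> {I. K \<subseteq> I \<and> I \<subseteq> A}"
      then show "I \<in> (\<lambda>I'. K \<union> I') ` Pow (A - K)" by (intro image_eqI[of _ _ "I - K"]) auto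
    qed
  qed (use assms in auto)
  have "(\<Sum>I\<in>{I. K \<subseteq> I \<and> I \<subseteq> A}. x ^ (card A - card I) * y ^ (card I - card K)) =
        (\<Sum>I'\<in>Pow (A - K). x ^ (card (A - K) - card I') * y ^ card I')"
    unfolding img[symmetric] sum.reindex[OF inj] o_def
  proof (rule sum.cong[OF refl])
    fix I' assume I': "I' \<in> Pow (A - K)"
    then have "finite I'" using assms finite_subset by blast
    then have c: "card (K \<union> I') = card K + card I'" using I' fin by (intro card_Un_disjoint) auto
    have "card (A - K) = card A - card K" using assms fin by (simp add: card_Diff_subset)
    then show "x ^ (card A - card (K \<union> I')) * y ^ (card (K \<union> I') - card K) = x ^ (card (A - K) - card I') * y ^ card I'"
      using c by simp
  qed
  also have "\<dots> = (x + y) ^ card (A - K)" using assms by (intro binom_Pow) auto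
  also have "card (A - K) = card A - card K" using assms fin by (simp add: card_Diff_subset)
  finally show ?thesis .
qed

lemma count1:
  fixes x y :: "'a::comm_semiring_1"
  assumes U: "U \<in> PT"
  shows "(\<Sum>T\<in>CT U. of_nat (pbinom U T) * (x ^ (deg U - deg T) * y ^ deg T)) = (x + y) ^ deg U"
proof -
  have "(\<Sum>T\<in>CT U. of_nat (pbinom U T) * (x ^ (deg U - deg T) * y ^ deg T)) =
        (\<Sum>I\<in>Pow (leaves U). x ^ (deg U - deg (contr U I)) * y ^ deg (contr U I))"
    by (rule fiber_sum)
  also have "\<dots> = (\<Sum>I\<in>Pow (leaves U). x ^ (card (leaves U) - card I) * y ^ card I)"
    using U by (intro sum.cong refl) (auto simp: card_leaves_contr deg_def)
  also have "\<dots> = (x + y) ^ deg U" unfolding deg_def by (rule binom_Pow[OF finite_leaves])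
  finally show ?thesis .
qed

lemma pbinom_contr:
  assumes U: "U \<in> PT" and I: "I \<subseteq> leaves U"
  shows "of_nat (pbinom (contr U I) T) * (y::'a::comm_semiring_1) ^ (card I - deg T) =
         (\<Sum>K\<in>{K. K \<subseteq> I \<and> contr U K = T}. y ^ (card I - card K))"
proof -
  obtain \<psi> where bij: "bij_betw \<psi> (leaves (contr U I)) I"
    and tr: "\<And>J. J \<subseteq> leaves (contr U I) \<Longrightarrow> contr U (\<psi> ` J) = contr (contr U I) J"
    using contr_main[of U I] U I by (auto simp: PT_def)
  have "pbinom (contr U I) T = card {J \<in> Pow (leaves (contr U I)). contr (contr U I) J = T}"
    by (rule pbinom_alt)
  also have "\<dots> = card (image \<psi> ` {J \<in> Pow (leaves (contr U I)). contr (contr U I) J = T})"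
    using bij_betw_Pow[OF bij] by (intro card_image[symmetric]) (auto simp: bij_betw_def intro: inj_on_subset)
  also have "image \<psi> ` {J \<in> Pow (leaves (contr U I)). contr (contr U I) J = T} = {K. K \<subseteq> I \<and> contr U K = T}"
  proof
    show "image \<psi> ` {J \<in> Pow (leaves (contr U I)). contr (contr U I) J = T} \<subseteq> {K. K \<subseteq> I \<and> contr U K = T}"
      using bij tr by (auto simp: bij_betw_def)
    show "{K. K \<subseteq> I \<and> contr U K = T} \<subseteq> image \<psi> ` {J \<in> Pow (leaves (contr U I)). contr (contr U I) J = T}"
    proof
      fix K assume K: "K \<in> {K. K \<subseteq> I \<and> contr U K = T}"
      have "K \<in> image \<psi> ` Pow (leaves (contr U I))" using bij_betw_Pow[OF bij] K by (auto simp: bij_betw_def)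
      then obtain J where J: "J \<subseteq> leaves (contr U I)" "K = \<psi> ` J" by blast
      then show "K \<in> image \<psi> ` {J \<in> Pow (leaves (contr U I)). contr (contr U I) J = T}"
        using K tr by auto
    qed
  qed
  finally have pb: "pbinom (contr U I) T = card {K. K \<subseteq> I \<and> contr U K = T}" .
  have "(\<Sum>K\<in>{K. K \<subseteq> I \<and> contr U K = T}. y ^ (card I - card K)) =
        (\<Sum>K\<in>{K. K \<subseteq> I \<and> contr U K = T}. y ^ (card I - deg T))"
    using U I by (intro sum.cong refl) (auto simp: deg_contr)
  also have "\<dots> = of_nat (pbinom (contr U I) T) * y ^ (card I - deg T)" by (simp add: pb)
  finally show ?thesis by simp
qed

lemma count2:
  fixes x y :: "'a::comm_semiring_1"
  assumes U: "U \<in> PT"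
  shows "(\<Sum>V\<in>CT U. of_nat (pbinom U V) * (of_nat (pbinom V T) * x ^ (deg U - deg V) * y ^ (deg V - deg T))) =
         of_nat (pbinom U T) * (x + y) ^ (deg U - deg T)"
proof -
  define L where "L = leaves U"
  have finL: "finite L" by (simp add: L_def finite_leaves)
  have "(\<Sum>V\<in>CT U. of_nat (pbinom U V) * (of_nat (pbinom V T) * x ^ (deg U - deg V) * y ^ (deg V - deg T))) =
        (\<Sum>I\<in>Pow L. of_nat (pbinom (contr U I) T) * x ^ (deg U - deg (contr U I)) * y ^ (deg (contr U I) - deg T))"
    unfolding L_def by (rule fiber_sum)
  also have "\<dots> = (\<Sum>I\<in>Pow L. x ^ (card L - card I) * (of_nat (pbinom (contr U I) T) * y ^ (card I - deg T)))"
    using U by (intro sum.cong refl) (auto simp: card_leaves_contr deg_def L_def mult_ac)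
  also have "\<dots> = (\<Sum>I\<in>Pow L. \<Sum>K\<in>{K. K \<in> Pow L \<and> (K \<subseteq> I \<and> contr U K = T)}. x ^ (card L - card I) * y ^ (card I - card K))"
  proof (rule sum.cong[OF refl])
    fix I assume I: "I \<in> Pow L"
    have "{K. K \<in> Pow L \<and> (K \<subseteq> I \<and> contr U K = T)} = {K. K \<subseteq> I \<and> contr U K = T}" using I by auto
    then show "x ^ (card L - card I) * (of_nat (pbinom (contr U I) T) * y ^ (card I - deg T)) =
      (\<Sum>K\<in>{K. K \<in> Pow L \<and> (K \<subseteq> I \<and> contr U K = T)}. x ^ (card L - card I) * y ^ (card I - card K))"
      using pbinom_contr[OF U, of I T y] I by (simp add: L_def sum_distrib_left)
  qed
  also have "\<dots> = (\<Sum>K\<in>Pow L. \<Sum>I\<in>{I. I \<in> Pow L \<and> (K \<subseteq> I \<and> contr U K = T)}. x ^ (card L - card I) * y ^ (card I - card K))"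
    by (rule sum.swap_restrict) (simp_all add: finL)
  also have "\<dots> = (\<Sum>K\<in>{K \<in> Pow L. contr U K = T}. (x + y) ^ (card L - card K))"
  proof -
    have "(\<Sum>K\<in>Pow L. \<Sum>I\<in>{I. I \<in> Pow L \<and> (K \<subseteq> I \<and> contr U K = T)}. x ^ (card L - card I) * y ^ (card I - card K))
      = (\<Sum>K\<in>Pow L. if contr U K = T then (x + y) ^ (card L - card K) else 0)"
    proof (rule sum.cong[OF refl])
      fix K assume K: "K \<in> Pow L"
      show "(\<Sum>I\<in>{I. I \<in> Pow L \<and> (K \<subseteq> I \<and> contr U K = T)}. x ^ (card L - card I) * y ^ (card I - card K)) =
            (if contr U K = T then (x + y) ^ (card L - card K) else 0)"
      proof (cases "contr U K = T")
        case True
        have "{I. I \<in> Pow L \<and> (K \<subseteq> I \<and> contr U K = T)} = {I. K \<subseteq> I \<and> I \<subseteq> L}" using True by auto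
        then show ?thesis using binom_Pow_rel[OF finL, of K x y] K True by simp
      qed simp
    qed
    also have "\<dots> = (\<Sum>K\<in>{K \<in> Pow L. contr U K = T}. (x + y) ^ (card L - card K))"
      by (simp add: sum.If_cases finL Int_def)
    finally show ?thesis .
  qed
  also have "\<dots> = (\<Sum>K\<in>{K \<in> Pow L. contr U K = T}. (x + y) ^ (deg U - deg T))"
    using U by (intro sum.cong refl) (auto simp: card_leaves_contr deg_def L_def)
  also have "\<dots> = of_nat (pbinom U T) * (x + y) ^ (deg U - deg T)"
    by (simp add: pbinom_alt L_def)
  finally show ?thesis .
qed



lemma prad_ge: "0 \<le> \<rho> \<Longrightarrow> (\<lambda>T. norm (g T) * \<rho> ^ deg T) summable_on PT \<Longrightarrow> ereal \<rho> \<le> prad g"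
  unfolding prad_def by (rule Sup_upper) auto

lemma prad_summable:
  assumes "0 \<le> \<rho>" "ereal \<rho> < prad g"
  shows "(\<lambda>T. norm (g T) * \<rho> ^ deg T) summable_on PT"
proof -
  obtain x where x: "x \<in> {ereal \<rho> | \<rho>. \<rho> \<ge> 0 \<and> (\<lambda>T. norm (g T) * \<rho> ^ deg T) summable_on PT}" "ereal \<rho> < x"
    using assms(2) unfolding prad_def by (auto simp: less_Sup_iff)
  then obtain \<rho>' where r: "x = ereal \<rho>'" "\<rho>' \<ge> 0" "(\<lambda>T. norm (g T) * \<rho>' ^ deg T) summable_on PT" by auto
  then have "\<rho> < \<rho>'" using x by simp
  show ?thesis
    by (rule summable_on_comparison_test[OF r(3)])
       (use assms \<open>\<rho> < \<rho>'\<close> in \<open>auto intro!: mult_left_mono power_mono\<close>)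
qed

lemma has_sum_CT:
  fixes w :: "ptree \<Rightarrow> 'a::{topological_comm_monoid_add, t2_space, comm_semiring_1}"
  assumes "U \<in> PT"
  shows "((\<lambda>T. of_nat (pbinom U T) * w T) has_sum (\<Sum>T\<in>CT U. of_nat (pbinom U T) * w T)) PT"
  by (rule has_sum_finite_neutralI) (use assms finite_CT CT_PT pbinom_zero in auto)

lemma infsum_CT:
  fixes w :: "ptree \<Rightarrow> 'a::{topological_comm_monoid_add, t2_space, comm_semiring_1}"
  assumes "U \<in> PT"
  shows "(\<Sum>\<^sub>\<infinity>T\<in>PT. of_nat (pbinom U T) * w T) = (\<Sum>T\<in>CT U. of_nat (pbinom U T) * w T)"
  using has_sum_CT[OF assms] by (rule infsumI)

lemma E1:
  fixes g :: pseries and s r :: real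
  assumes s: "0 \<le> s" and r: "0 < r" and sr: "ereal (s + r) < prad g"
  shows E1a: "T \<in> PT \<Longrightarrow> (\<lambda>U. norm (g U) * of_nat (pbinom U T) * s ^ (deg U - deg T)) summable_on PT"
    and E1b: "cmod h = s \<Longrightarrow> (\<lambda>T. norm (pexpand g h T) * r ^ deg T) summable_on PT"
proof -
  define D where "D U T = norm (g U) * (of_nat (pbinom U T) * (s ^ (deg U - deg T) * r ^ deg T))" for U T
  have Dnn: "D U T \<ge> 0" for U T using s r by (simp add: D_def)
  have fib: "((\<lambda>T. D U T) has_sum (norm (g U) * (s + r) ^ deg U)) PT" if "U \<in> PT" for U
  proof -
    have "((\<lambda>T. of_nat (pbinom U T) * (s ^ (deg U - deg T) * r ^ deg T)) has_sum (s + r) ^ deg U) PT"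
      using has_sum_CT[OF that, of "\<lambda>T. s ^ (deg U - deg T) * r ^ deg T"] count1[OF that, of s r] by simp
    then show ?thesis unfolding D_def by (rule has_sum_cmult_right)
  qed
  have M: "(\<lambda>U. norm (g U) * (s + r) ^ deg U) summable_on PT"
    using prad_summable[OF _ sr] s r by simp
  have prod: "(\<lambda>(U, T). D U T) summable_on PT \<times> PT"
    using summable_on_SigmaI[where f="\<lambda>(U, T). D U T" and A=PT and B="\<lambda>_. PT", OF _ M] fib Dnn by auto
  then have prod': "(\<lambda>(T, U). D U T) summable_on PT \<times> PT"
    using summable_on_swap[of "\<lambda>(U, T). D U T" PT PT] by simp
  have col: "(\<lambda>U. D U T) summable_on PT" if "T \<in> PT" for T
    using summable_on_SigmaD1[where f="\<lambda>T U. D U T" and B="\<lambda>_. PT", OF _ that] prod' by simp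
  have colsum: "(\<lambda>T. \<Sum>\<^sub>\<infinity>U\<in>PT. D U T) summable_on PT"
    using summable_on_Sigma_banach[where f="\<lambda>T U. D U T" and A=PT and B="\<lambda>_. PT"] prod' by simp
  show a: "(\<lambda>U. norm (g U) * of_nat (pbinom U T) * s ^ (deg U - deg T)) summable_on PT" if T: "T \<in> PT" for T
  proof -
    have "(\<lambda>U. D U T * (1 / r ^ deg T)) summable_on PT" using col[OF T] by (rule summable_on_cmult_left)
    moreover have "D U T * (1 / r ^ deg T) = norm (g U) * of_nat (pbinom U T) * s ^ (deg U - deg T)" for U
      using r by (simp add: D_def)
    ultimately show ?thesis by simp
  qed
  assume h: "cmod h = s"
  show "(\<lambda>T. norm (pexpand g h T) * r ^ deg T) summable_on PT"
  proof (rule summable_on_comparison_test[OF colsum])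
    fix T assume T: "T \<in> PT"
    have nrm: "norm (g U * of_nat (pbinom U T) * h ^ (deg U - deg T)) = norm (g U) * of_nat (pbinom U T) * s ^ (deg U - deg T)" for U
      using h by (simp add: norm_mult norm_power)
    have "norm (pexpand g h T) \<le> (\<Sum>\<^sub>\<infinity>U\<in>PT. norm (g U * of_nat (pbinom U T) * h ^ (deg U - deg T)))"
      unfolding pexpand_def using a[OF T] nrm by (intro norm_infsum_bound) simp
    also have "\<dots> = (\<Sum>\<^sub>\<infinity>U\<in>PT. norm (g U) * of_nat (pbinom U T) * s ^ (deg U - deg T))"
      using nrm by simp
    finally have "norm (pexpand g h T) * r ^ deg T \<le> (\<Sum>\<^sub>\<infinity>U\<in>PT. norm (g U) * of_nat (pbinom U T) * s ^ (deg U - deg T)) * r ^ deg T"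
      using r by (intro mult_right_mono) auto
    also have "\<dots> = (\<Sum>\<^sub>\<infinity>U\<in>PT. norm (g U) * of_nat (pbinom U T) * s ^ (deg U - deg T) * r ^ deg T)"
      by (rule infsum_cmult_left[symmetric]) (use a[OF T] in simp)
    also have "\<dots> = (\<Sum>\<^sub>\<infinity>U\<in>PT. D U T)" by (simp add: D_def mult_ac)
    finally show "norm (pexpand g h T) * r ^ deg T \<le> (\<Sum>\<^sub>\<infinity>U\<in>PT. D U T)" .
    show "0 \<le> norm (pexpand g h T) * r ^ deg T" using r by simp
  qed
qed


lemma E2:
  fixes g :: pseries and a h :: complex
  assumes lt: "ereal (cmod a + cmod h) < prad g" and T: "T \<in> PT"
  shows "pexpand (pexpand g a) h T = pexpand g (a + h) T"
proof -
  obtain x where x: "ereal (cmod a + cmod h) < ereal x" "ereal x < prad g" using ereal_dense2[OF lt] by blast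
  define r where "r = x - (cmod a + cmod h)"
  have r: "r > 0" using x(1) by (simp add: r_def)
  define E where "E U V = g U * of_nat (pbinom U V) * a ^ (deg U - deg V) * (of_nat (pbinom V T) * h ^ (deg V - deg T))" for U V
  define N where "N U V = norm (g U) * (of_nat (pbinom U V) * (of_nat (pbinom V T) * cmod a ^ (deg U - deg V) * cmod h ^ (deg V - deg T)))" for U V
  have NE: "norm (E U V) = N U V" for U V by (simp add: E_def N_def norm_mult norm_power mult_ac)
  have M: "(\<lambda>U. norm (g U) * of_nat (pbinom U T) * (cmod a + cmod h) ^ (deg U - deg T)) summable_on PT"
    using E1a[of "cmod a + cmod h" r g T] r x T by (simp add: r_def)
  have fib: "((\<lambda>V. N U V) has_sum (norm (g U) * of_nat (pbinom U T) * (cmod a + cmod h) ^ (deg U - deg T))) PT"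
    if U: "U \<in> PT" for U
  proof -
    have "((\<lambda>V. of_nat (pbinom U V) * (of_nat (pbinom V T) * cmod a ^ (deg U - deg V) * cmod h ^ (deg V - deg T)))
           has_sum (of_nat (pbinom U T) * (cmod a + cmod h) ^ (deg U - deg T))) PT"
      using has_sum_CT[OF U, of "\<lambda>V. of_nat (pbinom V T) * cmod a ^ (deg U - deg V) * cmod h ^ (deg V - deg T)"]
        count2[OF U, of T "cmod a" "cmod h"] by simp
    then show ?thesis unfolding N_def mult.assoc by (rule has_sum_cmult_right)
  qed
  have Nnn: "N U V \<ge> 0" for U V by (simp add: N_def)
  have Nprod: "(\<lambda>(U, V). N U V) summable_on PT \<times> PT"
    using summable_on_SigmaI[where f="\<lambda>(U, V). N U V" and A=PT and B="\<lambda>_. PT", OF _ M] fib Nnn by auto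
  have Eprod: "(\<lambda>(U, V). E U V) summable_on PT \<times> PT"
  proof -
    have "(\<lambda>p. norm ((\<lambda>(U, V). E U V) p)) summable_on PT \<times> PT"
    proof -
      have "(\<lambda>p. norm ((\<lambda>(U, V). E U V) p)) = (\<lambda>(U, V). N U V)" by (auto simp: NE)
      then show ?thesis using Nprod by simp
    qed
    then show ?thesis by (simp add: summable_on_iff_abs_summable_on_complex)
  qed
  have inner: "(\<lambda>U. g U * of_nat (pbinom U V) * a ^ (deg U - deg V)) summable_on PT" if V: "V \<in> PT" for V
  proof -
    have "(\<lambda>U. norm (g U) * of_nat (pbinom U V) * cmod a ^ (deg U - deg V)) summable_on PT"
    proof -
      have "cmod a + cmod h < x" using x(1) by simp
      then have "cmod a < x" using norm_ge_zero[of h] by linarith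
      then show ?thesis using E1a[of "cmod a" "r + cmod h" g V] r x V by (simp add: r_def add.assoc)
    qed
    then show ?thesis
      by (simp add: summable_on_iff_abs_summable_on_complex norm_mult norm_power)
  qed
  have "pexpand (pexpand g a) h T = (\<Sum>\<^sub>\<infinity>V\<in>PT. \<Sum>\<^sub>\<infinity>U\<in>PT. E U V)"
    unfolding pexpand_def E_def
    by (rule infsum_cong, subst infsum_cmult_left') (simp add: mult.assoc)
  also have "\<dots> = (\<Sum>\<^sub>\<infinity>U\<in>PT. \<Sum>\<^sub>\<infinity>V\<in>PT. E U V)"
    using infsum_swap_banach[OF Eprod] by simp
  also have "\<dots> = (\<Sum>\<^sub>\<infinity>U\<in>PT. g U * of_nat (pbinom U T) * (a + h) ^ (deg U - deg T))"
  proof (rule infsum_cong)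
    fix U assume U: "U \<in> PT"
    have "(\<Sum>\<^sub>\<infinity>V\<in>PT. E U V) = g U * (\<Sum>\<^sub>\<infinity>V\<in>PT. of_nat (pbinom U V) * (of_nat (pbinom V T) * a ^ (deg U - deg V) * h ^ (deg V - deg T)))"
      unfolding E_def by (subst infsum_cmult_right'[symmetric]) (simp add: mult_ac)
    also have "\<dots> = g U * (of_nat (pbinom U T) * (a + h) ^ (deg U - deg T))"
      using infsum_CT[OF U, of "\<lambda>V. of_nat (pbinom V T) * a ^ (deg U - deg V) * h ^ (deg V - deg T)"]
        count2[OF U, of T a h] by simp
    finally show "(\<Sum>\<^sub>\<infinity>V\<in>PT. E U V) = g U * of_nat (pbinom U T) * (a + h) ^ (deg U - deg T)"
      by (simp add: mult_ac)
  qed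
  also have "\<dots> = pexpand g (a + h) T" by (simp add: pexpand_def)
  finally show ?thesis .
qed


lemma E3:
  fixes g :: pseries
  assumes T: "T \<in> PT"
  shows "(\<lambda>h. pexpand g h T) holomorphic_on {h. ereal (cmod h) < prad g}"
proof -
  define B where "B k = {U \<in> PT. deg U - deg T = k}" for k
  define c where "c k = (\<Sum>\<^sub>\<infinity>U\<in>B k. g U * of_nat (pbinom U T))" for k
  have bij: "bij_betw snd (Sigma UNIV B) PT"
  proof (rule bij_betw_imageI)
    show "inj_on snd (Sigma UNIV B)" by (auto simp: inj_on_def B_def)
    show "snd ` Sigma UNIV B = PT"
    proof
      show "PT \<subseteq> snd ` Sigma UNIV B"
      proof
        fix U assume "U \<in> PT"
        then show "U \<in> snd ` Sigma UNIV B" by (intro image_eqI[of _ _ "(deg U - deg T, U)"]) (auto simp: B_def)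
      qed
    qed (auto simp: B_def)
  qed
  have rep: "(\<lambda>k. c k * h ^ k) sums pexpand g h T" if h: "ereal (cmod h) < prad g" for h
  proof -
    obtain x where x: "ereal (cmod h) < ereal x" "ereal x < prad g" using ereal_dense2[OF h] by blast
    define \<phi> where "\<phi> U = g U * of_nat (pbinom U T) * h ^ (deg U - deg T)" for U
    have "(\<lambda>U. norm (g U) * of_nat (pbinom U T) * cmod h ^ (deg U - deg T)) summable_on PT"
      using E1a[of "cmod h" "x - cmod h" g T] x T by simp
    then have \<phi>s: "\<phi> summable_on PT"
      by (simp add: \<phi>_def summable_on_iff_abs_summable_on_complex norm_mult norm_power)
    have \<phi>S: "(\<lambda>(k, U). \<phi> U) summable_on Sigma UNIV B"
    proof -
      have "(\<lambda>p. \<phi> (snd p)) summable_on Sigma UNIV B"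
        using summable_on_reindex_bij_betw[OF bij, of \<phi>] \<phi>s by simp
      moreover have "(\<lambda>p. \<phi> (snd p)) = (\<lambda>(k, U). \<phi> U)" by auto
      ultimately show ?thesis by metis
    qed
    have eq1: "(\<Sum>\<^sub>\<infinity>k. \<Sum>\<^sub>\<infinity>U\<in>B k. \<phi> U) = (\<Sum>\<^sub>\<infinity>(k, U)\<in>Sigma UNIV B. \<phi> U)"
      using infsum_Sigma'_banach[where f="\<lambda>k U. \<phi> U", OF \<phi>S] by simp
    have sm: "(\<lambda>k. \<Sum>\<^sub>\<infinity>U\<in>B k. \<phi> U) summable_on UNIV"
      using summable_on_Sigma_banach[where f="\<lambda>k U. \<phi> U", OF \<phi>S] by simp
    have eq2: "(\<Sum>\<^sub>\<infinity>(k, U)\<in>Sigma UNIV B. \<phi> U) = (\<Sum>\<^sub>\<infinity>U\<in>PT. \<phi> U)"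
    proof -
      have "(\<Sum>\<^sub>\<infinity>p\<in>Sigma UNIV B. \<phi> (snd p)) = (\<Sum>\<^sub>\<infinity>U\<in>PT. \<phi> U)"
        by (rule infsum_reindex_bij_betw[OF bij])
      moreover have "(\<lambda>p. \<phi> (snd p)) = (\<lambda>(k, U). \<phi> U)" by auto
      ultimately show ?thesis by metis
    qed
    have eq3: "(\<Sum>\<^sub>\<infinity>U\<in>B k. \<phi> U) = c k * h ^ k" for k
    proof -
      have "(\<Sum>\<^sub>\<infinity>U\<in>B k. \<phi> U) = (\<Sum>\<^sub>\<infinity>U\<in>B k. g U * of_nat (pbinom U T) * h ^ k)"
        by (rule infsum_cong) (simp add: \<phi>_def B_def)
      also have "\<dots> = c k * h ^ k" unfolding c_def by (rule infsum_cmult_left')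
      finally show ?thesis .
    qed
    have "((\<lambda>k. c k * h ^ k) has_sum pexpand g h T) UNIV"
    proof -
      have "((\<lambda>k. \<Sum>\<^sub>\<infinity>U\<in>B k. \<phi> U) has_sum (\<Sum>\<^sub>\<infinity>U\<in>PT. \<phi> U)) UNIV"
        using has_sum_infsum[OF sm] eq1 eq2 by simp
      then have "((\<lambda>k. c k * h ^ k) has_sum (\<Sum>\<^sub>\<infinity>U\<in>PT. \<phi> U)) UNIV" by (simp only: eq3)
      then show ?thesis by (simp add: pexpand_def \<phi>_def)
    qed
    then show ?thesis by (rule has_sum_imp_sums)
  qed
  have conv: "conv_radius c \<ge> prad g"
  proof (rule conv_radius_geI_ex')
    fix r :: real assume "0 < r" "ereal r < prad g"
    then have "ereal (cmod (of_real r :: complex)) < prad g" by simp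
    from rep[OF this] show "summable (\<lambda>n. c n * of_real r ^ n)" by (rule sums_summable)
  qed
  have "eval_fps (Abs_fps c) holomorphic_on {h. ereal (cmod h) < prad g}"
  proof (rule holomorphic_on_eval_fps)
    show "{h. ereal (cmod h) < prad g} \<subseteq> eball 0 (fps_conv_radius (Abs_fps c))"
      using conv by (auto simp: fps_conv_radius_def eball_def)
  qed
  then show ?thesis
  proof (rule holomorphic_transform)
    fix h assume "h \<in> {h. ereal (cmod h) < prad g}"
    then show "eval_fps (Abs_fps c) h = pexpand g h T"
      using rep by (simp add: eval_fps_def sums_iff)
  qed
qed

lemma eball_eq: "{z::complex. ereal (cmod (z - c)) < E} =
  (if E = \<infinity> then UNIV else if E = -\<infinity> then {} else ball c (real_of_ereal E))"
  by (cases E) (auto simp: dist_norm norm_minus_commute)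

lemma eball_open: "open {z::complex. ereal (cmod (z - c)) < E}"
  by (simp add: eball_eq)

lemma eball_convex: "convex {z::complex. ereal (cmod (z - c)) < E}"
  by (simp add: eball_eq)


lemma prad_expand_ge:
  assumes "0 < r" "ereal (cmod a + r) < prad f"
  shows "ereal r \<le> prad (pexpand f a)"
  using E1b[of "cmod a" r f a] assms by (intro prad_ge) auto

theorem proposition3p1:
  fixes f :: pseries
  assumes "prad f > 0"
  shows "planar_analytic {a. ereal (cmod a) < prad f} (\<lambda>a. pexpand f a)"
proof -
  define D where "D = {a. ereal (cmod a) < prad f}"
  have Deq: "D = {z. ereal (cmod (z - 0)) < prad f}" by (simp add: D_def)
  have openD: "open D" unfolding Deq by (rule eball_open)
  have convD: "convex D" unfolding Deq by (rule eball_convex)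
  have gap: "\<exists>x. cmod a < x \<and> ereal x < prad f" if "a \<in> D" for a
    using ereal_dense2[of "ereal (cmod a)" "prad f"] that by (auto simp: D_def)
  have radpos: "prad (pexpand f a) > 0" if a: "a \<in> D" for a
  proof -
    obtain x where x: "cmod a < x" "ereal x < prad f" using gap[OF a] by blast
    then have "ereal (x - cmod a) \<le> prad (pexpand f a)" by (intro prad_expand_ge) auto
    moreover have "0 < ereal (x - cmod a)" using x by simp
    ultimately show ?thesis by order
  qed
  have compat: "series_eq (pexpand (pexpand f a) (b - a)) (pexpand f b)"
    if a: "a \<in> D" and b: "b \<in> D" and ab: "ereal (cmod (b - a)) < prad (pexpand f a)" for a b
    unfolding series_eq_def
  proof
    fix T assume T: "T \<in> PT"
    define S where "S = D \<inter> {z. ereal (cmod (z - a)) < prad (pexpand f a)}"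
    have openS: "open S" unfolding S_def using openD eball_open by blast
    have connS: "connected S" unfolding S_def using convD eball_convex by (intro convex_connected convex_Int)
    obtain x where x: "cmod a < x" "ereal x < prad f" using gap[OF a] by blast
    define \<delta> where "\<delta> = x - cmod a"
    have \<delta>: "\<delta> > 0" using x by (simp add: \<delta>_def)
    have sub: "ball a \<delta> \<subseteq> S"
    proof
      fix z assume z: "z \<in> ball a \<delta>"
      then have lt: "cmod (z - a) < \<delta>" by (simp add: dist_norm norm_minus_commute)
      have "cmod z \<le> cmod a + cmod (z - a)" using norm_triangle_ineq[of a "z - a"] by simp
      then have "cmod z < x" using lt by (simp add: \<delta>_def)
      then have "ereal (cmod z) < ereal x" by simp
      then have "z \<in> D" using x(2) unfolding D_def by (blast intro: less_trans)
      moreover have "ereal \<delta> \<le> prad (pexpand f a)" using \<delta> x by (intro prad_expand_ge) (auto simp: \<delta>_def)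
      moreover have "ereal (cmod (z - a)) < ereal \<delta>" using lt by simp
      ultimately show "z \<in> S" unfolding S_def by (blast intro: less_le_trans)
    qed
    have holG: "(\<lambda>z. pexpand (pexpand f a) (z - a) T) holomorphic_on S"
    proof -
      have "(\<lambda>h. pexpand (pexpand f a) h T) holomorphic_on {h. ereal (cmod h) < prad (pexpand f a)}"
        by (rule E3[OF T])
      then have "(\<lambda>h. pexpand (pexpand f a) h T) holomorphic_on ((\<lambda>z. z - a) ` S)"
        by (rule holomorphic_on_subset) (auto simp: S_def)
      then have "((\<lambda>h. pexpand (pexpand f a) h T) \<circ> (\<lambda>z. z - a)) holomorphic_on S"
        by (intro holomorphic_on_compose) (auto intro: holomorphic_intros)
      then show ?thesis by (simp add: o_def)
    qed
    have holH: "(\<lambda>z. pexpand f z T) holomorphic_on S"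
      by (rule holomorphic_on_subset[OF E3[OF T]]) (auto simp: S_def D_def)
    have eq: "pexpand (pexpand f a) (z - a) T = pexpand f z T" if z: "z \<in> ball a \<delta>" for z
    proof -
      have "cmod (z - a) < \<delta>" using z by (simp add: dist_norm norm_minus_commute)
      then have "ereal (cmod a + cmod (z - a)) < ereal x" by (simp add: \<delta>_def)
      then have "ereal (cmod a + cmod (z - a)) < prad f" using x(2) by (rule less_trans)
      from E2[OF this T] show ?thesis by simp
    qed
    have "b \<in> S" using b ab by (simp add: S_def)
    have "pexpand (pexpand f a) (b - a) T = pexpand f b T"
      by (rule analytic_continuation_open[where s="ball a \<delta>" and s'=S, OF open_ball openS _ connS sub holG holH eq \<open>b \<in> S\<close>])
         (use \<delta> in simp)
    then show "pexpand (pexpand f a) (b - a) T = pexpand f b T" .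
  qed
  have "0 \<in> D" using assms by (simp add: D_def zero_ereal_def)
  then show ?thesis
    unfolding planar_analytic_def D_def[symmetric]
    using openD convex_connected[OF convD] radpos compat by auto
qed

end
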